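(* Let $M=((W,\preccurlyeq,S),V)$ be an $\mathrm{ITL}^{\mathrm{BD}_n}$ model and $w\in W$ with $M,w\models\{\Box(\neg p\vee\neg\neg p)\mid p\in\mathbb{P}\}$. Then there exist an $\mathrm{ITL}^{\mathrm{BD}_n}$ model $M'=((W',\preccurlyeq',S'),V')$, a world $w'\in W'$ and an intuitionistic temporal bisimulation $Z\subseteq W\times W'$ such that for all $i\ge0$, $S^i(w)\,Z\,S'^i(w')$ and the subframe generated by $S'^i(w')$ has a unique $\preccurlyeq'$-maximal world $u_i$.
   Context: Fix a countable set $\mathbb{P}$ of atoms. Temporal formulas: $\varphi ::= p\mid\bot\mid\varphi\wedge\varphi\mid\varphi\vee\varphi\mid\varphi\to\varphi\mid\circ\varphi\mid\varphi\,\mathsf{U}\,\varphi\mid\varphi\,\mathsf{R}\,\varphi$; $\neg\varphi:=\varphi\to\bot$, $\Box\varphi:=\bot\,\mathsf{R}\,\varphi$. An intuitionistic temporal frame is $(W,\preccurlyeq,S)$ with $W\ne\emptyset$, $\preccurlyeq$ a partial order, $S:W\to W$ forward confluent ($w\preccurlyeq v\Rightarrow S(w)\preccurlyeq S(v)$); persistent if also backward confluent (if $S(w)=v\preccurlyeq u$ then some $t\succcurlyeq w$ has $S(t)=u$). A model adds $V:W\to2^{\mathbb{P}}$ monotone along $\preccurlyeq$. Satisfaction: atoms via $V$; $\bot$ never; $\wedge,\vee$ pointwise; $M,w\models\varphi\to\psi$ iff for all $v\succcurlyeq w$, $M,v\models\varphi$ implies $M,v\models\psi$; $\circ\varphi$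 at $w$ iff $\varphi$ at $S(w)$; $\varphi\,\mathsf{U}\,\psi$: some $k\ge0$ with $\psi$ at $S^k(w)$ and $\varphi$ at $S^i(w)$ for all $0\le i<k$; $\varphi\,\mathsf{R}\,\psi$: for all $k\ge0$, $\psi$ at $S^k(w)$ or $\varphi$ at some $S^i(w)$, $0\le i<k$. An $\mathrm{ITL}^{\mathrm{BD}_n}$ model is a model on a persistent frame with no chain of $n+1$ pairwise distinct $\preccurlyeq$-related worlds. A world is maximal if no distinct world lies $\preccurlyeq$-above it; the subframe generated by $x$ is $\{y\mid x\preccurlyeq y\}$. An intuitionistic temporal bisimulation between $M_1=((W_1,\preccurlyeq_1,S_1),V_1)$ and $M_2=((W_2,\preccurlyeq_2,S_2),V_2)$ is $Z\subseteq W_1\times W_2$ such that whenever $w_1Zw_2$: (C1) $V_1(w_1)=V_2(w_2)$; (C2) for every $v_1\succcurlyeq w_1$ there is $v_2\succcurlyeq w_2$ with $v_1Zv_2$; (C3) for every $v_2\succcurlyeq w_2$ there is $v_1\succcurlyeq w_1$ with $v_1Zv_2$; (C5) $S_1(w_1)\,Z\,S_2(w_2)$; (C6) for all $k_1\ge0$ there are $k_2\ge0$ and $v_1Zv_2$ with $v_2\preccurlyeq S_2^{k_2}(w_2)$, $S_1^{k_1}(w_1)\preccurlyeq v_1$, and for all $0\le j_2<k_2$ there are $0\le j_1<k_1$ and $u_1Zu_2$ with $S_1^{j_1}(w_1)\preccurlyeq u_1$, $u_2\preccurlyeq S_2^{j_2}(w_2)$; (C7) for all $k_2\ge0$ there are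 $k_1\ge0$ and $v_1Zv_2$ with $v_1\preccurlyeq S_1^{k_1}(w_1)$, $S_2^{k_2}(w_2)\preccurlyeq v_2$, and for all $0\le j_1<k_1$ there are $0\le j_2<k_2$ and $u_1Zu_2$ with $S_2^{j_2}(w_2)\preccurlyeq u_2$, $u_1\preccurlyeq S_1^{j_1}(w_1)$; (C8) for all $k_2\ge0$ there are $k_1\ge0$ and $v_1Zv_2$ with $v_2\preccurlyeq S_2^{k_2}(w_2)$, $S_1^{k_1}(w_1)\preccurlyeq v_1$, and for all $0\le j_1<k_1$ there are $0\le j_2<k_2$ and $u_1Zu_2$ with $S_1^{j_1}(w_1)\preccurlyeq u_1$, $u_2\preccurlyeq S_2^{j_2}(w_2)$; (C9) for all $k_1\ge0$ there are $k_2\ge0$ and $v_1Zv_2$ with $v_1\preccurlyeq S_1^{k_1}(w_1)$, $S_2^{k_2}(w_2)\preccurlyeq v_2$, and for all $0\le j_2<k_2$ there are $0\le j_1<k_1$ and $u_1Zu_2$ with $S_2^{j_2}(w_2)\preccurlyeq u_2$, $u_1\preccurlyeq S_1^{j_1}(w_1)$. *)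

theory Defs
  imports Main "HOL-Library.Countable"
begin

datatype 'p form =
    Atom 'p | Bot | And "'p form" "'p form" | Or "'p form" "'p form"
  | Imp "'p form" "'p form" | Next "'p form"
  | Until "'p form" "'p form" | Release "'p form" "'p form"

definition Neg :: "'p form \<Rightarrow> 'p form" where
  "Neg \<phi> = Imp \<phi> Bot"

definition Box :: "'p form \<Rightarrow> 'p form" where
  "Box \<phi> = Release Bot \<phi>"

fun sat :: "'w set \<Rightarrow> ('w \<Rightarrow> 'w \<Rightarrow> bool) \<Rightarrow> ('w \<Rightarrow> 'w) \<Rightarrow> ('w \<Rightarrow> 'p set)
            \<Rightarrow> 'w \<Rightarrow> 'p form \<Rightarrow> bool" where
  "sat W le S V w (Atom p) = (p \<in> V w)"
| "sat W le S V w Bot = False"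
| "sat W le S V w (And \<phi> \<psi>) = (sat W le S V w \<phi> \<and> sat W le S V w \<psi>)"
| "sat W le S V w (Or \<phi> \<psi>) = (sat W le S V w \<phi> \<or> sat W le S V w \<psi>)"
| "sat W le S V w (Imp \<phi> \<psi>) =
     (\<forall>v\<in>W. le w v \<longrightarrow> sat W le S V v \<phi> \<longrightarrow> sat W le S V v \<psi>)"
| "sat W le S V w (Next \<phi>) = sat W le S V (S w) \<phi>"
| "sat W le S V w (Until \<phi> \<psi>) =
     (\<exists>k. sat W le S V ((S ^^ k) w) \<psi> \<and> (\<forall>i<k. sat W le S V ((S ^^ i) w) \<phi>))"
| "sat W le S V w (Release \<phi> \<psi>) =
     (\<forall>k. sat W le S V ((S ^^ k) w) \<psi> \<or> (\<exists>i<k. sat W le S V ((S ^^ i) w) \<phi>))"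

definition itl_frame :: "'w set \<Rightarrow> ('w \<Rightarrow> 'w \<Rightarrow> bool) \<Rightarrow> ('w \<Rightarrow> 'w) \<Rightarrow> bool" where
  "itl_frame W le S \<longleftrightarrow>
     W \<noteq> {} \<and> (\<forall>w\<in>W. S w \<in> W)
   \<and> (\<forall>w\<in>W. le w w)
   \<and> (\<forall>u\<in>W. \<forall>v\<in>W. le u v \<and> le v u \<longrightarrow> u = v)
   \<and> (\<forall>u\<in>W. \<forall>v\<in>W. \<forall>x\<in>W. le u v \<and> le v x \<longrightarrow> le u x)
   \<and> (\<forall>w\<in>W. \<forall>v\<in>W. le w v \<longrightarrow> le (S w) (S v))"

definition persistent_frame :: "'w set \<Rightarrow> ('w \<Rightarrow> 'w \<Rightarrow> bool) \<Rightarrow> ('w \<Rightarrow> 'w) \<Rightarrow> bool" where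
  "persistent_frame W le S \<longleftrightarrow> itl_frame W le S
   \<and> (\<forall>w\<in>W. \<forall>u\<in>W. le (S w) u \<longrightarrow> (\<exists>t\<in>W. le w t \<and> S t = u))"

definition itl_model :: "'w set \<Rightarrow> ('w \<Rightarrow> 'w \<Rightarrow> bool) \<Rightarrow> ('w \<Rightarrow> 'w) \<Rightarrow> ('w \<Rightarrow> 'p set) \<Rightarrow> bool" where
  "itl_model W le S V \<longleftrightarrow> itl_frame W le S
   \<and> (\<forall>w\<in>W. \<forall>v\<in>W. le w v \<longrightarrow> V w \<subseteq> V v)"

definition bounded_depth :: "nat \<Rightarrow> 'w set \<Rightarrow> ('w \<Rightarrow> 'w \<Rightarrow> bool) \<Rightarrow> bool" where
  "bounded_depth n W le \<longleftrightarrow>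
     \<not> (\<exists>f. (\<forall>i\<le>n. f i \<in> W) \<and> inj_on f {0..n} \<and> (\<forall>i<n. le (f i) (f (Suc i))))"

definition itl_bd_model :: "nat \<Rightarrow> 'w set \<Rightarrow> ('w \<Rightarrow> 'w \<Rightarrow> bool) \<Rightarrow> ('w \<Rightarrow> 'w) \<Rightarrow> ('w \<Rightarrow> 'p set) \<Rightarrow> bool" where
  "itl_bd_model n W le S V \<longleftrightarrow>
     itl_model W le S V \<and> persistent_frame W le S \<and> bounded_depth n W le"

definition maximal_world :: "'w set \<Rightarrow> ('w \<Rightarrow> 'w \<Rightarrow> bool) \<Rightarrow> 'w \<Rightarrow> bool" where
  "maximal_world W le u \<longleftrightarrow> u \<in> W \<and> (\<forall>v\<in>W. le u v \<longrightarrow> v = u)"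

definition generated :: "'w set \<Rightarrow> ('w \<Rightarrow> 'w \<Rightarrow> bool) \<Rightarrow> 'w \<Rightarrow> 'w set" where
  "generated W le x = {y \<in> W. le x y}"

definition unique_max_above :: "'w set \<Rightarrow> ('w \<Rightarrow> 'w \<Rightarrow> bool) \<Rightarrow> 'w \<Rightarrow> bool" where
  "unique_max_above W le x \<longleftrightarrow> (\<exists>!u. maximal_world (generated W le x) le u)"

definition itl_bisim ::
  "'w set \<Rightarrow> ('w \<Rightarrow> 'w \<Rightarrow> bool) \<Rightarrow> ('w \<Rightarrow> 'w) \<Rightarrow> ('w \<Rightarrow> 'p set) \<Rightarrow>
   'v set \<Rightarrow> ('v \<Rightarrow> 'v \<Rightarrow> bool) \<Rightarrow> ('v \<Rightarrow> 'v) \<Rightarrow> ('v \<Rightarrow> 'p set) \<Rightarrow>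
   ('w \<times> 'v) set \<Rightarrow> bool" where
  "itl_bisim W1 le1 S1 V1 W2 le2 S2 V2 Z \<longleftrightarrow> Z \<subseteq> W1 \<times> W2 \<and>
   (\<forall>(w1, w2) \<in> Z.
     \<comment> \<open>C1\<close>
     V1 w1 = V2 w2
     \<comment> \<open>C2\<close>
   \<and> (\<forall>v1\<in>W1. le1 w1 v1 \<longrightarrow> (\<exists>v2\<in>W2. le2 w2 v2 \<and> (v1, v2) \<in> Z))
     \<comment> \<open>C3\<close>
   \<and> (\<forall>v2\<in>W2. le2 w2 v2 \<longrightarrow> (\<exists>v1\<in>W1. le1 w1 v1 \<and> (v1, v2) \<in> Z))
     \<comment> \<open>C5\<close>
   \<and> (S1 w1, S2 w2) \<in> Z
     \<comment> \<open>C6\<close>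
   \<and> (\<forall>k1. \<exists>k2 v1 v2. (v1, v2) \<in> Z \<and> le2 v2 ((S2 ^^ k2) w2) \<and> le1 ((S1 ^^ k1) w1) v1 \<and>
        (\<forall>j2<k2. \<exists>j1<k1. \<exists>u1 u2. (u1, u2) \<in> Z \<and> le1 ((S1 ^^ j1) w1) u1 \<and> le2 u2 ((S2 ^^ j2) w2)))
     \<comment> \<open>C7\<close>
   \<and> (\<forall>k2. \<exists>k1 v1 v2. (v1, v2) \<in> Z \<and> le1 v1 ((S1 ^^ k1) w1) \<and> le2 ((S2 ^^ k2) w2) v2 \<and>
        (\<forall>j1<k1. \<exists>j2<k2. \<exists>u1 u2. (u1, u2) \<in> Z \<and> le2 ((S2 ^^ j2) w2) u2 \<and> le1 u1 ((S1 ^^ j1) w1)))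
     \<comment> \<open>C8\<close>
   \<and> (\<forall>k2. \<exists>k1 v1 v2. (v1, v2) \<in> Z \<and> le2 v2 ((S2 ^^ k2) w2) \<and> le1 ((S1 ^^ k1) w1) v1 \<and>
        (\<forall>j1<k1. \<exists>j2<k2. \<exists>u1 u2. (u1, u2) \<in> Z \<and> le1 ((S1 ^^ j1) w1) u1 \<and> le2 u2 ((S2 ^^ j2) w2)))
     \<comment> \<open>C9\<close>
   \<and> (\<forall>k1. \<exists>k2 v1 v2. (v1, v2) \<in> Z \<and> le1 v1 ((S1 ^^ k1) w1) \<and> le2 ((S2 ^^ k2) w2) v2 \<and>
        (\<forall>j2<k2. \<exists>j1<k1. \<exists>u1 u2. (u1, u2) \<in> Z \<and> le2 ((S2 ^^ j2) w2) u2 \<and> le1 u1 ((S1 ^^ j1) w1))))"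

end

theory Submission
  imports Defs
begin

lemma tC6:
  assumes Z: "\<And>j. ((S1^^j) a, (S2^^j) b) \<in> Z" and R1: "\<And>j. le1 ((S1^^j) a) ((S1^^j) a)"
    and R2: "\<And>j. le2 ((S2^^j) b) ((S2^^j) b)"
  shows "\<forall>k1. \<exists>k2 v1 v2. (v1, v2) \<in> Z \<and> le2 v2 ((S2 ^^ k2) b) \<and> le1 ((S1 ^^ k1) a) v1 \<and>
        (\<forall>j2<k2. \<exists>j1<k1. \<exists>u1 u2. (u1, u2) \<in> Z \<and> le1 ((S1 ^^ j1) a) u1 \<and> le2 u2 ((S2 ^^ j2) b))"
proof
  fix k1 show "\<exists>k2 v1 v2. (v1, v2) \<in> Z \<and> le2 v2 ((S2 ^^ k2) b) \<and> le1 ((S1 ^^ k1) a) v1 \<and>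
        (\<forall>j2<k2. \<exists>j1<k1. \<exists>u1 u2. (u1, u2) \<in> Z \<and> le1 ((S1 ^^ j1) a) u1 \<and> le2 u2 ((S2 ^^ j2) b))"
    apply (rule exI[of _ k1], rule exI[of _ "(S1^^k1) a"], rule exI[of _ "(S2^^k1) b"])
    using Z R1 R2 by blast
qed

lemma tC7:
  assumes Z: "\<And>j. ((S1^^j) a, (S2^^j) b) \<in> Z" and R1: "\<And>j. le1 ((S1^^j) a) ((S1^^j) a)"
    and R2: "\<And>j. le2 ((S2^^j) b) ((S2^^j) b)"
  shows "\<forall>k2. \<exists>k1 v1 v2. (v1, v2) \<in> Z \<and> le1 v1 ((S1 ^^ k1) a) \<and> le2 ((S2 ^^ k2) b) v2 \<and>
        (\<forall>j1<k1. \<exists>j2<k2. \<exists>u1 u2. (u1, u2) \<in> Z \<and> le2 ((S2 ^^ j2) b) u2 \<and> le1 u1 ((S1 ^^ j1) a))"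
proof
  fix k2 show "\<exists>k1 v1 v2. (v1, v2) \<in> Z \<and> le1 v1 ((S1 ^^ k1) a) \<and> le2 ((S2 ^^ k2) b) v2 \<and>
        (\<forall>j1<k1. \<exists>j2<k2. \<exists>u1 u2. (u1, u2) \<in> Z \<and> le2 ((S2 ^^ j2) b) u2 \<and> le1 u1 ((S1 ^^ j1) a))"
    apply (rule exI[of _ k2], rule exI[of _ "(S1^^k2) a"], rule exI[of _ "(S2^^k2) b"])
    using Z R1 R2 by blast
qed

lemma tC8:
  assumes Z: "\<And>j. ((S1^^j) a, (S2^^j) b) \<in> Z" and R1: "\<And>j. le1 ((S1^^j) a) ((S1^^j) a)"
    and R2: "\<And>j. le2 ((S2^^j) b) ((S2^^j) b)"
  shows "\<forall>k2. \<exists>k1 v1 v2. (v1, v2) \<in> Z \<and> le2 v2 ((S2 ^^ k2) b) \<and> le1 ((S1 ^^ k1) a) v1 \<and>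
        (\<forall>j1<k1. \<exists>j2<k2. \<exists>u1 u2. (u1, u2) \<in> Z \<and> le1 ((S1 ^^ j1) a) u1 \<and> le2 u2 ((S2 ^^ j2) b))"
proof
  fix k2 show "\<exists>k1 v1 v2. (v1, v2) \<in> Z \<and> le2 v2 ((S2 ^^ k2) b) \<and> le1 ((S1 ^^ k1) a) v1 \<and>
        (\<forall>j1<k1. \<exists>j2<k2. \<exists>u1 u2. (u1, u2) \<in> Z \<and> le1 ((S1 ^^ j1) a) u1 \<and> le2 u2 ((S2 ^^ j2) b))"
    apply (rule exI[of _ k2], rule exI[of _ "(S1^^k2) a"], rule exI[of _ "(S2^^k2) b"])
    using Z R1 R2 by blast
qed

lemma tC9:
  assumes Z: "\<And>j. ((S1^^j) a, (S2^^j) b) \<in> Z" and R1: "\<And>j. le1 ((S1^^j) a) ((S1^^j) a)"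
    and R2: "\<And>j. le2 ((S2^^j) b) ((S2^^j) b)"
  shows "\<forall>k1. \<exists>k2 v1 v2. (v1, v2) \<in> Z \<and> le1 v1 ((S1 ^^ k1) a) \<and> le2 ((S2 ^^ k2) b) v2 \<and>
        (\<forall>j2<k2. \<exists>j1<k1. \<exists>u1 u2. (u1, u2) \<in> Z \<and> le2 ((S2 ^^ j2) b) u2 \<and> le1 u1 ((S1 ^^ j1) a))"
proof
  fix k1 show "\<exists>k2 v1 v2. (v1, v2) \<in> Z \<and> le1 v1 ((S1 ^^ k1) a) \<and> le2 ((S2 ^^ k2) b) v2 \<and>
        (\<forall>j2<k2. \<exists>j1<k1. \<exists>u1 u2. (u1, u2) \<in> Z \<and> le2 ((S2 ^^ j2) b) u2 \<and> le1 u1 ((S1 ^^ j1) a))"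
    apply (rule exI[of _ k1], rule exI[of _ "(S1^^k1) a"], rule exI[of _ "(S2^^k1) b"])
    using Z R1 R2 by blast
qed

locale L =
  fixes n :: nat and W :: "'w set" and le :: "'w \<Rightarrow> 'w \<Rightarrow> bool" and S :: "'w \<Rightarrow> 'w"
    and V :: "'w \<Rightarrow> 'p set" and w :: 'w
  assumes bd: "itl_bd_model n W le S V"
    and wW: "w \<in> W"
    and wem: "\<forall>p. sat W le S V w (Box (Or (Neg (Atom p)) (Neg (Neg (Atom p)))))"
begin

lemma frW: "itl_frame W le S" using bd unfolding itl_bd_model_def itl_model_def by (elim conjE)
lemma SW: "v \<in> W \<Longrightarrow> S v \<in> W"
proof -
  have "\<forall>w\<in>W. S w \<in> W" using frW unfolding itl_frame_def by (elim conjE) assumption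
  then show "v \<in> W \<Longrightarrow> S v \<in> W" by (rule bspec)
qed
lemma rfl: "v \<in> W \<Longrightarrow> le v v"
proof -
  have "\<forall>w\<in>W. le w w" using frW unfolding itl_frame_def by (elim conjE) assumption
  then show "v \<in> W \<Longrightarrow> le v v" by (rule bspec)
qed
lemma asym: "u \<in> W \<Longrightarrow> v \<in> W \<Longrightarrow> le u v \<Longrightarrow> le v u \<Longrightarrow> u = v"
proof -
  have "\<forall>u\<in>W. \<forall>v\<in>W. le u v \<and> le v u \<longrightarrow> u = v" using frW unfolding itl_frame_def by (elim conjE) assumption
  then show "u \<in> W \<Longrightarrow> v \<in> W \<Longrightarrow> le u v \<Longrightarrow> le v u \<Longrightarrow> u = v" by blast
qed
lemma trn: "u \<in> W \<Longrightarrow> v \<in> W \<Longrightarrow> x \<in> W \<Longrightarrow> le u v \<Longrightarrow> le v x \<Longrightarrow> le u x"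
proof -
  have "\<forall>u\<in>W. \<forall>v\<in>W. \<forall>x\<in>W. le u v \<and> le v x \<longrightarrow> le u x" using frW unfolding itl_frame_def by (elim conjE) assumption
  then show "u \<in> W \<Longrightarrow> v \<in> W \<Longrightarrow> x \<in> W \<Longrightarrow> le u v \<Longrightarrow> le v x \<Longrightarrow> le u x" by blast
qed
lemma fc: "u \<in> W \<Longrightarrow> v \<in> W \<Longrightarrow> le u v \<Longrightarrow> le (S u) (S v)"
proof -
  have "\<forall>w\<in>W. \<forall>v\<in>W. le w v \<longrightarrow> le (S w) (S v)" using frW unfolding itl_frame_def by (elim conjE) assumption
  then show "u \<in> W \<Longrightarrow> v \<in> W \<Longrightarrow> le u v \<Longrightarrow> le (S u) (S v)" by blast
qed
lemma bc: "u \<in> W \<Longrightarrow> v \<in> W \<Longrightarrow> le (S u) v \<Longrightarrow> \<exists>t\<in>W. le u t \<and> S t = v"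
proof -
  have "\<forall>w\<in>W. \<forall>u\<in>W. le (S w) u \<longrightarrow> (\<exists>t\<in>W. le w t \<and> S t = u)"
    using bd unfolding itl_bd_model_def persistent_frame_def by (elim conjE) assumption
  then show "u \<in> W \<Longrightarrow> v \<in> W \<Longrightarrow> le (S u) v \<Longrightarrow> \<exists>t\<in>W. le u t \<and> S t = v" by blast
qed
lemma Vmono: "u \<in> W \<Longrightarrow> v \<in> W \<Longrightarrow> le u v \<Longrightarrow> V u \<subseteq> V v"
proof -
  have "\<forall>w\<in>W. \<forall>v\<in>W. le w v \<longrightarrow> V w \<subseteq> V v"
    using bd unfolding itl_bd_model_def itl_model_def by (elim conjE) assumption
  then show "u \<in> W \<Longrightarrow> v \<in> W \<Longrightarrow> le u v \<Longrightarrow> V u \<subseteq> V v" by blast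
qed
lemma bdW: "bounded_depth n W le"
  using bd unfolding itl_bd_model_def by (elim conjE) assumption

lemma SkW: "(S ^^ k) w \<in> W"
  by (induction k) (auto simp: wW SW)

abbreviation mx where "mx v \<equiv> maximal_world W le v"

lemma ex_max: assumes xW: "x \<in> W" shows "\<exists>m. mx m \<and> le x m"
proof (rule ccontr)
  assume nm: "\<not> ?thesis"
  have step: "\<exists>z. z \<in> W \<and> le y z \<and> z \<noteq> y" if "y \<in> W" "le x y" for y
  proof (rule ccontr)
    assume "\<not> ?thesis"
    then have "mx y" using that unfolding maximal_world_def by blast
    then show False using nm that by blast
  qed
  define f where "f = rec_nat x (\<lambda>_ y. SOME z. z \<in> W \<and> le y z \<and> z \<noteq> y)"
  have f0: "f 0 = x" and fS: "\<And>i. f (Suc i) = (SOME z. z \<in> W \<and> le (f i) z \<and> z \<noteq> f i)"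
    by (simp_all add: f_def)
  have P: "f i \<in> W \<and> le x (f i)" for i
  proof (induction i)
    case 0 then show ?case using xW rfl f0 by simp
  next
    case (Suc i)
    then have "f (Suc i) \<in> W \<and> le (f i) (f (Suc i)) \<and> f (Suc i) \<noteq> f i"
    proof -
      have "\<exists>z. z \<in> W \<and> le (f i) z \<and> z \<noteq> f i" using step Suc by blast
      then show ?thesis unfolding fS by (rule someI_ex)
    qed
    then show ?case using Suc trn[of x "f i" "f (Suc i)"] xW by blast
  qed
  have Q: "le (f i) (f (Suc i)) \<and> f (Suc i) \<noteq> f i" for i
  proof -
    have "f (Suc i) \<in> W \<and> le (f i) (f (Suc i)) \<and> f (Suc i) \<noteq> f i"
    proof -
      have "\<exists>z. z \<in> W \<and> le (f i) z \<and> z \<noteq> f i" using step P by blast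
      then show ?thesis unfolding fS by (rule someI_ex)
    qed
    then show ?thesis by blast
  qed
  have R: "le (f i) (f (i + d))" for i d
  proof (induction d)
    case 0 then show ?case using P rfl by simp
  next
    case (Suc d) then show ?case using P Q trn[of "f i" "f (i+d)" "f (Suc (i+d))"] by simp
  qed
  have "inj_on f {0..n}"
  proof (rule inj_onI)
    fix i j assume "i \<in> {0..n}" "j \<in> {0..n}" "f i = f j"
    show "i = j"
    proof (rule ccontr)
      assume "i \<noteq> j"
      then consider "i < j" | "j < i" by linarith
      then show False
      proof cases
        case 1
        then obtain d where d: "j = Suc (i + d)" using less_imp_Suc_add by blast
        have "le (f (Suc i)) (f i)" using R[of "Suc i" d] d \<open>f i = f j\<close> by simp
        then show False using Q[of i] asym P by blast
      next
        case 2
        then obtain d where d: "i = Suc (j + d)" using less_imp_Suc_add by blast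
        have "le (f (Suc j)) (f j)" using R[of "Suc j" d] d \<open>f i = f j\<close> by simp
        then show False using Q[of j] asym P by blast
      qed
    qed
  qed
  moreover have "\<forall>i\<le>n. f i \<in> W" using P by blast
  moreover have "\<forall>i<n. le (f i) (f (Suc i))" using Q by blast
  ultimately show False using bdW unfolding bounded_depth_def by blast
qed

lemma mx_S: assumes "mx m" shows "mx (S m)"
proof -
  have mW: "m \<in> W" using assms unfolding maximal_world_def by blast
  have "u = S m" if "u \<in> W" "le (S m) u" for u
    using bc[OF mW that(1) that(2)] assms unfolding maximal_world_def by blast
  then show ?thesis using SW mW unfolding maximal_world_def by blast
qed

lemma same_val:
  assumes "mx m1" "mx m2" "le ((S^^k) w) m1" "le ((S^^k) w) m2" "p \<in> V m1"
  shows "p \<in> V m2"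
proof (rule ccontr)
  assume np: "p \<notin> V m2"
  have m1W: "m1 \<in> W" and m2W: "m2 \<in> W" using assms unfolding maximal_world_def by blast+
  have "sat W le S V ((S^^k) w) (Or (Neg (Atom p)) (Neg (Neg (Atom p))))"
    using wem[rule_format, of p] unfolding Box_def by auto
  then have "(\<forall>v\<in>W. le ((S^^k) w) v \<longrightarrow> p \<notin> V v) \<or>
     (\<forall>v\<in>W. le ((S^^k) w) v \<longrightarrow> \<not> (\<forall>u\<in>W. le v u \<longrightarrow> p \<notin> V u))"
    unfolding Neg_def by simp
  then show False
  proof
    assume "\<forall>v\<in>W. le ((S^^k) w) v \<longrightarrow> p \<notin> V v"
    then show False using assms m1W by blast
  next
    assume "\<forall>v\<in>W. le ((S^^k) w) v \<longrightarrow> \<not> (\<forall>u\<in>W. le v u \<longrightarrow> p \<notin> V u)"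
    then obtain u where "u \<in> W" "le m2 u" "p \<in> V u" using m2W assms(4) by blast
    then show False using assms(2) np unfolding maximal_world_def by blast
  qed
qed


definition U :: "('w \<times> nat) set" where
  "U = {(v,k). v \<in> W \<and> le ((S^^k) w) v}"
definition Mx :: "nat \<Rightarrow> ('w \<times> nat) set" where
  "Mx k = {(m,k) | m. mx m \<and> le ((S^^k) w) m}"
definition cls :: "'w \<times> nat \<Rightarrow> ('w \<times> nat) set" where
  "cls x = (if mx (fst x) then Mx (snd x) else {x})"
definition W' :: "('w \<times> nat) set set" where
  "W' = cls ` U"
definition le' :: "('w \<times> nat) set \<Rightarrow> ('w \<times> nat) set \<Rightarrow> bool" where
  "le' A B = (\<exists>x\<in>A. \<exists>y\<in>B. snd x = snd y \<and> le (fst x) (fst y))"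
definition S' :: "('w \<times> nat) set \<Rightarrow> ('w \<times> nat) set" where
  "S' A = cls (S (fst (SOME x. x \<in> A)), Suc (snd (SOME x. x \<in> A)))"
definition V' :: "('w \<times> nat) set \<Rightarrow> 'p set" where
  "V' A = {p. \<exists>x\<in>A. p \<in> V (fst x)}"

lemma mxW: "mx m \<Longrightarrow> m \<in> W" unfolding maximal_world_def by blast
lemma mxE: "mx m \<Longrightarrow> u \<in> W \<Longrightarrow> le m u \<Longrightarrow> u = m" unfolding maximal_world_def by blast

lemma UI: "x \<in> U \<Longrightarrow> fst x \<in> W \<and> le ((S^^snd x) w) (fst x)"
  unfolding U_def by auto

lemma in_cls: "x \<in> U \<Longrightarrow> x \<in> cls x"
  unfolding cls_def Mx_def U_def by auto

lemma cls_mem: assumes "A \<in> W'" "x \<in> A" shows "x \<in> U \<and> A = cls x"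
proof -
  obtain y where y: "y \<in> U" "A = cls y" using assms unfolding W'_def by blast
  show ?thesis
  proof (cases "mx (fst y)")
    case True
    then have "A = Mx (snd y)" using y unfolding cls_def by simp
    then obtain m where m: "x = (m, snd y)" "mx m" "le ((S^^snd y) w) m"
      using assms(2) unfolding Mx_def by blast
    then have "x \<in> U" unfolding U_def using mxW by auto
    moreover have "cls x = Mx (snd y)" using m unfolding cls_def by simp
    ultimately show ?thesis using \<open>A = Mx (snd y)\<close> by simp
  next
    case False
    then show ?thesis using y assms(2) unfolding cls_def by simp
  qed
qed

lemma clsW: "x \<in> U \<Longrightarrow> cls x \<in> W'" unfolding W'_def by blast

lemma le'_cls: "x \<in> U \<Longrightarrow> y \<in> U \<Longrightarrow> snd x = snd y \<Longrightarrow> le (fst x) (fst y) \<Longrightarrow> le' (cls x) (cls y)"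
  unfolding le'_def using in_cls by blast

lemma max_top: assumes "A \<in> W'" "a \<in> A" "mx (fst a)" "B \<in> W'" "le' A B" shows "B = A"
proof -
  obtain a' b' where ab: "a' \<in> A" "b' \<in> B" "snd a' = snd b'" "le (fst a') (fst b')"
    using assms(5) unfolding le'_def by blast
  have A: "A = Mx (snd a)" using cls_mem[OF assms(1,2)] assms(3) unfolding cls_def by simp
  then have a': "mx (fst a')" "snd a' = snd a" using ab(1) unfolding Mx_def by auto
  have b'U: "b' \<in> U" "B = cls b'" using cls_mem[OF assms(4) ab(2)] by auto
  have "fst b' = fst a'" using mxE[OF a'(1) _ ab(4)] UI[OF b'U(1)] by blast
  then have "B = Mx (snd a)" using b'U a' ab(3) unfolding cls_def by simp
  then show ?thesis using A by simp
qed

lemma up: assumes "x \<in> U" "B \<in> W'" "le' (cls x) B"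
  shows "\<exists>u. (u, snd x) \<in> U \<and> le (fst x) u \<and> B = cls (u, snd x)"
proof -
  obtain a b where ab: "a \<in> cls x" "b \<in> B" "snd a = snd b" "le (fst a) (fst b)"
    using assms(3) unfolding le'_def by blast
  have bU: "b \<in> U" "B = cls b" using cls_mem[OF assms(2) ab(2)] by auto
  show ?thesis
  proof (cases "mx (fst x)")
    case True
    have "B = cls x" using max_top[OF clsW[OF assms(1)] in_cls[OF assms(1)] True assms(2,3)] .
    then show ?thesis using assms(1) UI[OF assms(1)] rfl by (cases x) auto
  next
    case False
    then have "a = x" using ab(1) unfolding cls_def by simp
    then show ?thesis using bU ab by (cases b) auto
  qed
qed

lemma SU: "x \<in> U \<Longrightarrow> (S (fst x), Suc (snd x)) \<in> U"
  unfolding U_def using SW fc SkW by auto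

lemma S'_cls: assumes "x \<in> U" shows "S' (cls x) = cls (S (fst x), Suc (snd x))"
proof -
  define y where "y = (SOME y. y \<in> cls x)"
  have y: "y \<in> cls x" unfolding y_def using in_cls[OF assms] by (rule someI)
  have "cls (S (fst y), Suc (snd y)) = cls (S (fst x), Suc (snd x))"
  proof (cases "mx (fst x)")
    case True
    then have "y \<in> Mx (snd x)" using y unfolding cls_def by simp
    then have "mx (fst y)" "snd y = snd x" unfolding Mx_def by auto
    then show ?thesis using True mx_S unfolding cls_def by simp
  next
    case False
    then show ?thesis using y unfolding cls_def by simp
  qed
  then show ?thesis unfolding S'_def y_def by simp
qed

lemma V'_cls: assumes "x \<in> U" shows "V' (cls x) = V (fst x)"
proof (cases "mx (fst x)")
  case True
  have xM: "x \<in> Mx (snd x)" using True UI[OF assms] unfolding Mx_def by (cases x) simp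
  have "V' (Mx (snd x)) = V (fst x)"
  proof
    show "V' (Mx (snd x)) \<subseteq> V (fst x)"
    proof
      fix p assume "p \<in> V' (Mx (snd x))"
      then obtain z where z: "z \<in> Mx (snd x)" "p \<in> V (fst z)" unfolding V'_def by blast
      then obtain m where m: "z = (m, snd x)" "mx m" "le ((S^^snd x) w) m" unfolding Mx_def by blast
      have "le ((S^^snd x) w) (fst x)" using UI[OF assms] by blast
      then show "p \<in> V (fst x)" using same_val[OF m(2) True m(3)] z(2) m(1) by simp
    qed
    show "V (fst x) \<subseteq> V' (Mx (snd x))"
      unfolding V'_def using xM by blast
  qed
  then show ?thesis using True unfolding cls_def by simp
next
  case False
  then show ?thesis unfolding cls_def V'_def by simp
qed

lemma W'E: assumes "A \<in> W'" obtains x where "x \<in> U" "A = cls x"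
  using assms unfolding W'_def by blast

lemma clsE: assumes "A \<in> W'"
  shows "(\<exists>y. y \<in> U \<and> \<not> mx (fst y) \<and> A = {y}) \<or> (\<exists>y\<in>A. mx (fst y))"
proof -
  obtain x where x: "x \<in> U" "A = cls x" using assms by (rule W'E)
  show ?thesis
  proof (cases "mx (fst x)")
    case True then show ?thesis using x in_cls by blast
  next
    case False then show ?thesis using x unfolding cls_def by (intro disjI1 exI[of _ x]) simp
  qed
qed

lemma f_ne: "W' \<noteq> {}"
proof -
  have "(w,0) \<in> U" unfolding U_def using wW rfl by simp
  then show ?thesis using clsW by blast
qed

lemma f_S: "A \<in> W' \<Longrightarrow> S' A \<in> W'"
proof -
  assume "A \<in> W'"
  then obtain x where x: "x \<in> U" "A = cls x" by (rule W'E)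
  have "S' A = cls (S (fst x), Suc (snd x))" using x S'_cls by simp
  then show ?thesis using clsW[OF SU[OF x(1)]] by simp
qed

lemma f_refl: "A \<in> W' \<Longrightarrow> le' A A"
proof -
  assume "A \<in> W'"
  then obtain x where x: "x \<in> U" "A = cls x" by (rule W'E)
  have "le (fst x) (fst x)" using rfl UI[OF x(1)] by blast
  then show ?thesis using le'_cls[OF x(1) x(1)] x(2) by simp
qed

lemma f_antisym: assumes AB: "A \<in> W'" "B \<in> W'" "le' A B" "le' B A" shows "A = B"
proof -
  consider (a) "\<exists>y\<in>A. mx (fst y)" | (b) "\<exists>y\<in>B. mx (fst y)"
    | (c) "\<exists>y. y \<in> U \<and> \<not> mx (fst y) \<and> A = {y}" "\<exists>y. y \<in> U \<and> \<not> mx (fst y) \<and> B = {y}"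
    using clsE[OF AB(1)] clsE[OF AB(2)] by blast
  then show ?thesis
  proof cases
    case a
    then obtain y where "y \<in> A" "mx (fst y)" by blast
    from max_top[OF AB(1) this AB(2,3)] show ?thesis by simp
  next
    case b
    then obtain y where "y \<in> B" "mx (fst y)" by blast
    from max_top[OF AB(2) this AB(1,4)] show ?thesis by simp
  next
    case c
    then obtain x y where xy: "x \<in> U" "A = {x}" "y \<in> U" "B = {y}" by blast
    then have "snd x = snd y" "le (fst x) (fst y)" "le (fst y) (fst x)"
      using AB(3,4) unfolding le'_def by auto
    moreover have "fst x = fst y" using asym[OF conjunct1[OF UI[OF xy(1)]] conjunct1[OF UI[OF xy(3)]]] calculation
      by blast
    ultimately have "x = y" by (simp add: prod_eq_iff)
    then show ?thesis using xy by simp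
  qed
qed

lemma f_trans: assumes ABC: "A \<in> W'" "B \<in> W'" "C \<in> W'" "le' A B" "le' B C" shows "le' A C"
proof -
  consider (a) "\<exists>y\<in>B. mx (fst y)" | (c) y where "y \<in> U" "\<not> mx (fst y)" "B = {y}"
    using clsE[OF ABC(2)] by blast
  then show ?thesis
  proof cases
    case a
    then obtain y where "y \<in> B" "mx (fst y)" by blast
    from max_top[OF ABC(2) this ABC(3,5)] show ?thesis using ABC(4) by simp
  next
    case c
    obtain a where a: "a \<in> A" "snd a = snd y" "le (fst a) (fst y)"
      using ABC(4) c(3) unfolding le'_def by auto
    obtain d where d: "d \<in> C" "snd y = snd d" "le (fst y) (fst d)"
      using ABC(5) c(3) unfolding le'_def by auto
    have "a \<in> U" "d \<in> U" using cls_mem a(1) d(1) ABC(1,3) by auto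
    then have "le (fst a) (fst d)"
      using trn[OF conjunct1[OF UI[OF \<open>a \<in> U\<close>]] conjunct1[OF UI[OF c(1)]] conjunct1[OF UI[OF \<open>d \<in> U\<close>]]] a d
      by blast
    then show ?thesis using a d unfolding le'_def by auto
  qed
qed

lemma f_fc: assumes AB: "A \<in> W'" "B \<in> W'" "le' A B" shows "le' (S' A) (S' B)"
proof -
  obtain a b where ab: "a \<in> A" "b \<in> B" "snd a = snd b" "le (fst a) (fst b)"
    using AB(3) unfolding le'_def by blast
  have U: "a \<in> U" "A = cls a" "b \<in> U" "B = cls b" using cls_mem AB ab by auto
  have "le (S (fst a)) (S (fst b))" using fc[OF conjunct1[OF UI[OF U(1)]] conjunct1[OF UI[OF U(3)]] ab(4)] .
  then have "le' (cls (S (fst a), Suc (snd a))) (cls (S (fst b), Suc (snd b)))"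
    using le'_cls[OF SU[OF U(1)] SU[OF U(3)]] ab(3) by simp
  then show ?thesis using U S'_cls by simp
qed

lemma frame': "itl_frame W' le' S'"
  unfolding itl_frame_def
  apply (intro conjI ballI impI)
       apply (rule f_ne)
      apply (erule f_S)
     apply (erule f_refl)
    apply (metis f_antisym)
   apply (metis f_trans)
  apply (metis f_fc)
  done

lemma persistent': "persistent_frame W' le' S'"
  unfolding persistent_frame_def
proof (intro conjI frame' ballI impI)
  fix A B assume AB: "A \<in> W'" "B \<in> W'" "le' (S' A) B"
  obtain x where x: "x \<in> U" "A = cls x" using AB(1) by (rule W'E)
  have "le' (cls (S (fst x), Suc (snd x))) B" using AB(3) x S'_cls by simp
  then obtain u where u: "(u, Suc (snd x)) \<in> U" "le (S (fst x)) u" "B = cls (u, Suc (snd x))"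
    using up[OF SU[OF x(1)] AB(2)] by auto
  obtain t where t: "t \<in> W" "le (fst x) t" "S t = u" using bc UI[OF x(1)] UI[OF u(1)] u(2) by force
  have tU: "(t, snd x) \<in> U" using t UI[OF x(1)] trn SkW unfolding U_def by blast
  have "le' A (cls (t, snd x))" using le'_cls[OF x(1) tU] t x by simp
  moreover have "S' (cls (t, snd x)) = B" using S'_cls[OF tU] t u by simp
  ultimately show "\<exists>T\<in>W'. le' A T \<and> S' T = B" using clsW[OF tU] by blast
qed

lemma model': "itl_model W' le' S' V'"
  unfolding itl_model_def
proof (intro conjI frame' ballI impI)
  fix A B assume AB: "A \<in> W'" "B \<in> W'" "le' A B"
  obtain a b where ab: "a \<in> A" "b \<in> B" "snd a = snd b" "le (fst a) (fst b)"
    using AB(3) unfolding le'_def by blast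
  have U: "a \<in> U" "A = cls a" "b \<in> U" "B = cls b" using cls_mem AB ab by auto
  show "V' A \<subseteq> V' B" using U V'_cls Vmono UI ab by simp
qed


lemma n_pos: "n \<noteq> 0"
proof
  assume "n = 0"
  then show False using bdW wW unfolding bounded_depth_def by (auto intro!: exI[of _ "\<lambda>_. w"])
qed

lemma bd': "bounded_depth n W' le'"
  unfolding bounded_depth_def
proof
  assume "\<exists>f. (\<forall>i\<le>n. f i \<in> W') \<and> inj_on f {0..n} \<and> (\<forall>i<n. le' (f i) (f (Suc i)))"
  then obtain f where fW: "\<And>i. i \<le> n \<Longrightarrow> f i \<in> W'" and inj: "inj_on f {0..n}"
    and fle: "\<And>i. i < n \<Longrightarrow> le' (f i) (f (Suc i))" by blast
  obtain m where m: "n = Suc m" using n_pos not0_implies_Suc by blast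
  define r where "r i = (SOME x. x \<in> f i)" for i
  have r: "r i \<in> U \<and> f i = cls (r i) \<and> r i \<in> f i" if i: "i \<le> n" for i
  proof -
    obtain x where "x \<in> U" "f i = cls x" using fW[OF i] by (rule W'E)
    then have "\<exists>x. x \<in> f i" using in_cls by blast
    then have "r i \<in> f i" unfolding r_def by (rule someI_ex)
    then show ?thesis using cls_mem fW[OF i] by blast
  qed
  have nm: "\<not> mx (fst (r i))" if "i < n" for i
  proof
    assume "mx (fst (r i))"
    moreover have ii: "i \<le> n" "Suc i \<le> n" using that by auto
    ultimately have "f (Suc i) = f i"
      using max_top[OF fW[OF ii(1)] conjunct2[OF conjunct2[OF r[OF ii(1)]]] _ fW[OF ii(2)] fle[OF that]] by blast
    moreover have "Suc i \<in> {0..n}" "i \<in> {0..n}" using ii by auto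
    ultimately have "Suc i = i" using inj_onD[OF inj] by blast
    then show False by simp
  qed
  have single: "f i = {r i}" if "i < n" for i using r[of i] nm[OF that] that unfolding cls_def by simp
  have step: "snd (r i) = snd (r (Suc i)) \<and> le (fst (r i)) (fst (r (Suc i)))" if "Suc i < n" for i
    using fle[of i] single[of i] single[of "Suc i"] that unfolding le'_def by auto
  obtain y where y: "y \<in> f n" "snd (r m) = snd y" "le (fst (r m)) (fst y)"
    using fle[of m] single[of m] m unfolding le'_def by auto
  have yU: "y \<in> U" "f n = cls y" using cls_mem[OF fW[OF order_refl] y(1)] by auto
  have lev: "snd (r i) = snd (r 0)" if "i \<le> m" for i
    using that
  proof (induction i)
    case 0 then show ?case by simp
  next
    case (Suc i)
    then have "Suc i < n" using m by simp
    then show ?case using step[of i] Suc by simp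
  qed
  define k where "k = snd (r 0)"
  define q where "q i = (if i < n then r i else y)" for i
  define g where "g i = fst (q i)" for i
  have qk: "q i = (g i, k)" for i
  proof (cases "i < n")
    case True
    then have "snd (r i) = k" using lev[of i] m k_def by simp
    then show ?thesis using True unfolding g_def q_def by (simp add: prod_eq_iff)
  next
    case False
    have "snd y = k" using lev[of m] y(2) k_def by simp
    then show ?thesis using False unfolding g_def q_def by (simp add: prod_eq_iff)
  qed
  have fq: "f i = cls (q i)" "q i \<in> U" if "i \<le> n" for i
  proof -
    show "f i = cls (q i)"
    proof (cases "i < n")
      case True then show ?thesis using r[OF that] unfolding q_def by simp
    next
      case False then have "i = n" using that by simp
      then show ?thesis using yU False unfolding q_def by simp
    qed
    show "q i \<in> U"
    proof (cases "i < n")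
      case True then show ?thesis using r[OF that] unfolding q_def by simp
    next
      case False then show ?thesis using yU unfolding q_def by simp
    qed
  qed
  have gW: "\<forall>i\<le>n. g i \<in> W" unfolding g_def using fq(2) UI by blast
  have gle: "\<forall>i<n. le (g i) (g (Suc i))"
  proof (intro allI impI)
    fix i assume i: "i < n"
    show "le (g i) (g (Suc i))"
    proof (cases "Suc i < n")
      case True then show ?thesis using step[OF True] i unfolding g_def q_def by simp
    next
      case False then have "i = m" "Suc i = n" using i m by simp_all
      then show ?thesis using y(3) m unfolding g_def q_def by simp
    qed
  qed
  have ginj: "inj_on g {0..n}"
  proof (rule inj_onI)
    fix i j assume ij: "i \<in> {0..n}" "j \<in> {0..n}" "g i = g j"
    have "q i = q j" using qk[of i] qk[of j] ij(3) by simp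
    then have "f i = f j" using fq(1)[of i] fq(1)[of j] ij(1,2) by simp
    then show "i = j" using inj_onD[OF inj _ ij(1,2)] by blast
  qed
  show False using bdW gW gle ginj unfolding bounded_depth_def by blast
qed


definition Z :: "('w \<times> ('w \<times> nat) set) set" where
  "Z = {(v, cls (v,k)) | v k. (v,k) \<in> U}"

lemma Z_S: "(a, b) \<in> Z \<Longrightarrow> ((S^^j) a, (S'^^j) b) \<in> Z"
proof (induction j)
  case 0 then show ?case by simp
next
  case (Suc j)
  then obtain k where "((S^^j) a, k) \<in> U" "(S'^^j) b = cls ((S^^j) a, k)" unfolding Z_def by blast
  then show ?case using S'_cls SU unfolding Z_def by fastforce
qed

lemma Z_refl: "(a, b) \<in> Z \<Longrightarrow> le a a \<and> le' b b \<and> a \<in> W \<and> b \<in> W'"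
  unfolding Z_def using UI rfl le'_cls clsW by fastforce

lemma bisim: "itl_bisim W le S V W' le' S' V' Z"
  unfolding itl_bisim_def
proof (intro conjI ballI)
  show "Z \<subseteq> W \<times> W'" using Z_refl by auto
next
  fix p assume "p \<in> Z"
  then obtain v k where vk: "p = (v, cls (v,k))" "(v,k) \<in> U" unfolding Z_def by blast
  obtain a b where ab: "p = (a, b)" by (cases p)
  have a: "a = v" and b: "b = cls (v,k)" using vk ab by auto
  have C69: "\<And>j. ((S^^j) a, (S'^^j) b) \<in> Z"
    using Z_S \<open>p \<in> Z\<close> ab by blast
  note R = Z_refl[OF C69]
  show "case p of (w1, w2) \<Rightarrow>
       V w1 = V' w2 \<and>
       (\<forall>v1\<in>W. le w1 v1 \<longrightarrow> (\<exists>v2\<in>W'. le' w2 v2 \<and> (v1, v2) \<in> Z)) \<and>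
       (\<forall>v2\<in>W'. le' w2 v2 \<longrightarrow> (\<exists>v1\<in>W. le w1 v1 \<and> (v1, v2) \<in> Z)) \<and>
       (S w1, S' w2) \<in> Z \<and>
       (\<forall>k1. \<exists>k2 v1 v2. (v1, v2) \<in> Z \<and> le' v2 ((S' ^^ k2) w2) \<and> le ((S ^^ k1) w1) v1 \<and>
              (\<forall>j2<k2. \<exists>j1<k1. \<exists>u1 u2. (u1, u2) \<in> Z \<and> le ((S ^^ j1) w1) u1 \<and> le' u2 ((S' ^^ j2) w2))) \<and>
       (\<forall>k2. \<exists>k1 v1 v2. (v1, v2) \<in> Z \<and> le v1 ((S ^^ k1) w1) \<and> le' ((S' ^^ k2) w2) v2 \<and>
              (\<forall>j1<k1. \<exists>j2<k2. \<exists>u1 u2. (u1, u2) \<in> Z \<and> le' ((S' ^^ j2) w2) u2 \<and> le u1 ((S ^^ j1) w1))) \<and>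
       (\<forall>k2. \<exists>k1 v1 v2. (v1, v2) \<in> Z \<and> le' v2 ((S' ^^ k2) w2) \<and> le ((S ^^ k1) w1) v1 \<and>
              (\<forall>j1<k1. \<exists>j2<k2. \<exists>u1 u2. (u1, u2) \<in> Z \<and> le ((S ^^ j1) w1) u1 \<and> le' u2 ((S' ^^ j2) w2))) \<and>
       (\<forall>k1. \<exists>k2 v1 v2. (v1, v2) \<in> Z \<and> le v1 ((S ^^ k1) w1) \<and> le' ((S' ^^ k2) w2) v2 \<and>
              (\<forall>j2<k2. \<exists>j1<k1. \<exists>u1 u2. (u1, u2) \<in> Z \<and> le' ((S' ^^ j2) w2) u2 \<and> le u1 ((S ^^ j1) w1)))"
    unfolding ab prod.case
  proof (intro conjI)
    show "V a = V' b" using V'_cls[OF vk(2)] a b by simp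
    show "\<forall>v1\<in>W. le a v1 \<longrightarrow> (\<exists>v2\<in>W'. le' b v2 \<and> (v1, v2) \<in> Z)"
    proof (intro ballI impI)
      fix v1 assume "v1 \<in> W" "le a v1"
      then have U1: "(v1, k) \<in> U" using vk(2) a trn SkW unfolding U_def by blast
      then show "\<exists>v2\<in>W'. le' b v2 \<and> (v1, v2) \<in> Z"
        using clsW le'_cls[OF vk(2) U1] \<open>le a v1\<close> a b unfolding Z_def by auto
    qed
    show "\<forall>v2\<in>W'. le' b v2 \<longrightarrow> (\<exists>v1\<in>W. le a v1 \<and> (v1, v2) \<in> Z)"
    proof (intro ballI impI)
      fix v2 assume "v2 \<in> W'" "le' b v2"
      then obtain u where "(u, k) \<in> U" "le v u" "v2 = cls (u, k)" using up[OF vk(2)] b by auto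
      then show "\<exists>v1\<in>W. le a v1 \<and> (v1, v2) \<in> Z" using a UI unfolding Z_def by fastforce
    qed
    show "(S a, S' b) \<in> Z" using C69[of 1] by simp
    have R1: "\<And>j. le ((S^^j) a) ((S^^j) a)" and R2: "\<And>j. le' ((S'^^j) b) ((S'^^j) b)"
      using R by blast+
    note T = tC6[of S a S' b Z le le', OF C69 R1 R2] tC7[of S a S' b Z le le', OF C69 R1 R2] tC8[of S a S' b Z le le', OF C69 R1 R2] tC9[of S a S' b Z le le', OF C69 R1 R2]
    show "\<forall>k1. \<exists>k2 v1 v2. (v1, v2) \<in> Z \<and> le' v2 ((S' ^^ k2) b) \<and> le ((S ^^ k1) a) v1 \<and>
              (\<forall>j2<k2. \<exists>j1<k1. \<exists>u1 u2. (u1, u2) \<in> Z \<and> le ((S ^^ j1) a) u1 \<and> le' u2 ((S' ^^ j2) b))"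
      by (rule T(1))
    show "\<forall>k2. \<exists>k1 v1 v2. (v1, v2) \<in> Z \<and> le v1 ((S ^^ k1) a) \<and> le' ((S' ^^ k2) b) v2 \<and>
              (\<forall>j1<k1. \<exists>j2<k2. \<exists>u1 u2. (u1, u2) \<in> Z \<and> le' ((S' ^^ j2) b) u2 \<and> le u1 ((S ^^ j1) a))"
      by (rule T(2))
    show "\<forall>k2. \<exists>k1 v1 v2. (v1, v2) \<in> Z \<and> le' v2 ((S' ^^ k2) b) \<and> le ((S ^^ k1) a) v1 \<and>
              (\<forall>j1<k1. \<exists>j2<k2. \<exists>u1 u2. (u1, u2) \<in> Z \<and> le ((S ^^ j1) a) u1 \<and> le' u2 ((S' ^^ j2) b))"
      by (rule T(3))
    show "\<forall>k1. \<exists>k2 v1 v2. (v1, v2) \<in> Z \<and> le v1 ((S ^^ k1) a) \<and> le' ((S' ^^ k2) b) v2 \<and>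
              (\<forall>j2<k2. \<exists>j1<k1. \<exists>u1 u2. (u1, u2) \<in> Z \<and> le' ((S' ^^ j2) b) u2 \<and> le u1 ((S ^^ j1) a))"
      by (rule T(4))
  qed
qed

lemma orbit: "(S'^^i) (cls (w,0)) = cls ((S^^i) w, i)"
proof (induction i)
  case 0 then show ?case by simp
next
  case (Suc i)
  have "((S^^i) w, i) \<in> U" unfolding U_def using SkW rfl by simp
  then show ?case using Suc S'_cls by simp
qed

lemma umax: assumes "x \<in> U" shows "unique_max_above W' le' (cls x)"
proof -
  let ?G = "generated W' le' (cls x)"
  obtain m where m: "mx m" "le (fst x) m" using ex_max UI[OF assms] by blast
  have mU: "(m, snd x) \<in> U" using m UI[OF assms] trn SkW mxW unfolding U_def by blast
  have cm: "cls (m, snd x) = Mx (snd x)" using m unfolding cls_def by simp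
  have inG: "Mx (snd x) \<in> ?G" using le'_cls[OF assms mU] m clsW[OF mU] cm
    unfolding generated_def by auto
  have mxG: "maximal_world ?G le' (Mx (snd x))"
    unfolding maximal_world_def
  proof (intro conjI ballI impI inG)
    fix B assume "B \<in> ?G" "le' (Mx (snd x)) B"
    then show "B = Mx (snd x)" using max_top[OF clsW[OF mU] in_cls[OF mU] _ _] m cm
      unfolding generated_def by auto
  qed
  have uq: "u = Mx (snd x)" if "maximal_world ?G le' u" for u
  proof -
    have uG: "u \<in> W'" "le' (cls x) u" using that unfolding maximal_world_def generated_def by auto
    then obtain u0 where u0: "(u0, snd x) \<in> U" "u = cls (u0, snd x)" using up[OF assms] by blast
    obtain m' where m': "mx m'" "le u0 m'" using ex_max UI[OF u0(1)] by auto
    have m'U: "(m', snd x) \<in> U" using m' UI[OF u0(1)] trn SkW mxW unfolding U_def by auto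
    have "le' u (Mx (snd x))" using le'_cls[OF u0(1) m'U] m' u0 unfolding cls_def by simp
    then show ?thesis using that inG unfolding maximal_world_def by blast
  qed
  show ?thesis unfolding unique_max_above_def using mxG uq by blast
qed

lemma main:
  "\<exists>(W' :: ('w \<times> nat) set set) le' S' V' w'.
           itl_bd_model n W' le' S' V' \<and> w' \<in> W' \<and>
           (\<exists>Z. itl_bisim W le S V W' le' S' V' Z \<and>
              (\<forall>i. ((S ^^ i) w, (S' ^^ i) w') \<in> Z \<and> unique_max_above W' le' ((S' ^^ i) w')))"
proof (intro exI conjI allI)
  have U0: "(w, 0) \<in> U" unfolding U_def using wW rfl by simp
  show "itl_bd_model n W' le' S' V'" unfolding itl_bd_model_def using model' persistent' bd' by blast
  show "cls (w,0) \<in> W'" using clsW[OF U0] .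
  show "itl_bisim W le S V W' le' S' V' Z" by (rule bisim)
  fix i
  have Ui: "((S^^i) w, i) \<in> U" unfolding U_def using SkW rfl by simp
  show "((S ^^ i) w, (S' ^^ i) (cls (w,0))) \<in> Z" using orbit Ui unfolding Z_def by auto
  show "unique_max_above W' le' ((S' ^^ i) (cls (w,0)))" using orbit umax[OF Ui] by simp
qed

end

theorem lemma4p13:
  fixes n :: nat
    and W :: "'w set" and le :: "'w \<Rightarrow> 'w \<Rightarrow> bool" and S :: "'w \<Rightarrow> 'w"
    and V :: "'w \<Rightarrow> ('p::countable) set" and w :: 'w
  assumes "itl_bd_model n W le S V"
    and "w \<in> W"
    and "\<forall>p. sat W le S V w (Box (Or (Neg (Atom p)) (Neg (Neg (Atom p)))))"
  shows "\<exists>(W' :: ('w \<times> nat) set set) le' S' V' w'.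
           itl_bd_model n W' le' S' V' \<and> w' \<in> W' \<and>
           (\<exists>Z. itl_bisim W le S V W' le' S' V' Z \<and>
              (\<forall>i. ((S ^^ i) w, (S' ^^ i) w') \<in> Z \<and> unique_max_above W' le' ((S' ^^ i) w')))"
proof -
  interpret L n W le S V w using assms by unfold_locales
  show ?thesis by (rule main)
qed

end
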